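(* Let $F:\mathbb{R}^n\to\mathbb{H}^{n+1}\subset\mathbb{L}^{n+2}$ be the immersion of a horosphere in the hyperbolic space, with unit normal vector field $N$ and all principal curvatures equal to $\kappa=\pm1$. Then the solution to the mean curvature flow with initial data $F$ is $$\widehat F^t(x)=\cosh(nt)F(x)+\kappa\sinh(nt)N(x),$$ for all $t\in\mathbb{R}$. Moreover, $\widehat F^t(\mathbb{R}^n)$ is a horosphere for all $t\in\mathbb{R}$.
   Context: $\mathbb{H}^{n+1}$ is the hyperboloid model of hyperbolic space in the Lorentzian space $\mathbb{L}^{n+2}$. Second fundamental form $h(v,w)=-\langle dN(v),dF(w)\rangle$, principal curvatures are its eigenvalues, mean curvature $H=\sum_i\kappa_i$. A family $\widehat F:M\times I\to\mathbb{H}^{n+1}$, $0\in I$, solves the mean curvature flow with initial condition $F$ if $\partial_t\widehat F=\widehat H\widehat N$ and $\widehat F(\cdot,0)=F$, where $\widehat N^t$ is a unit normal of $\widehat F^t$ and $\widehat H^t$ the corresponding mean curvature. *)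

theory Defs
  imports "HOL-Analysis.Analysis"
begin

text \<open>Lorentzian space L^(n+2) is modelled as (real^'n) \<times> real \<times> real,
  the last coordinate being the time-like one.\<close>

type_synonym 'n lor = "(real^'n) \<times> real \<times> real"

definition lorentz :: "'n::finite lor \<Rightarrow> 'n lor \<Rightarrow> real" where
  "lorentz p q = fst p \<bullet> fst q + fst (snd p) * fst (snd q) - snd (snd p) * snd (snd q)"

definition hyp_space :: "'n::finite lor set" where
  "hyp_space = {p. lorentz p p = -1 \<and> snd (snd p) > 0}"

definition horosphere :: "'n::finite lor set \<Rightarrow> bool" where
  "horosphere S \<longleftrightarrow> (\<exists>v. lorentz v v = 0 \<and> snd (snd v) > 0 \<and>
      S = {p \<in> hyp_space. lorentz p v = -1})"

definition dif :: "(real^'n \<Rightarrow> 'n::finite lor) \<Rightarrow> real^'n \<Rightarrow> real^'n \<Rightarrow> 'n lor" where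
  "dif F x = frechet_derivative F (at x)"

definition immersion_H :: "(real^'n \<Rightarrow> 'n::finite lor) \<Rightarrow> bool" where
  "immersion_H F \<longleftrightarrow> (\<forall>x. F x \<in> hyp_space \<and> F differentiable (at x) \<and> inj (dif F x))"

definition unit_normal :: "(real^'n \<Rightarrow> 'n::finite lor) \<Rightarrow> (real^'n \<Rightarrow> 'n lor) \<Rightarrow> bool" where
  "unit_normal F N \<longleftrightarrow> (\<forall>x. N differentiable (at x) \<and> lorentz (N x) (N x) = 1 \<and>
      lorentz (N x) (F x) = 0 \<and> (\<forall>v. lorentz (N x) (dif F x v) = 0))"

definition ind_metric :: "(real^'n \<Rightarrow> 'n::finite lor) \<Rightarrow> real^'n \<Rightarrow> real^'n \<Rightarrow> real^'n \<Rightarrow> real" where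
  "ind_metric F x v w = lorentz (dif F x v) (dif F x w)"

definition sff :: "(real^'n \<Rightarrow> 'n::finite lor) \<Rightarrow> (real^'n \<Rightarrow> 'n lor) \<Rightarrow> real^'n \<Rightarrow> real^'n \<Rightarrow> real^'n \<Rightarrow> real" where
  "sff F N x v w = - lorentz (dif N x v) (dif F x w)"

definition shape_op :: "(real^'n \<Rightarrow> 'n::finite lor) \<Rightarrow> (real^'n \<Rightarrow> 'n lor) \<Rightarrow> real^'n \<Rightarrow> real^'n \<Rightarrow> real^'n" where
  "shape_op F N x = (THE S. linear S \<and> (\<forall>v w. ind_metric F x (S v) w = sff F N x v w))"

definition principal_curvatures :: "(real^'n \<Rightarrow> 'n::finite lor) \<Rightarrow> (real^'n \<Rightarrow> 'n lor) \<Rightarrow> real^'n \<Rightarrow> real set" where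
  "principal_curvatures F N x = {k. \<exists>v. v \<noteq> 0 \<and> shape_op F N x v = k *\<^sub>R v}"

definition mean_curv :: "(real^'n \<Rightarrow> 'n::finite lor) \<Rightarrow> (real^'n \<Rightarrow> 'n lor) \<Rightarrow> real^'n \<Rightarrow> real" where
  "mean_curv F N x = trace (matrix (shape_op F N x))"

definition mcf_solution :: "real set \<Rightarrow> (real^'n \<Rightarrow> 'n::finite lor) \<Rightarrow> (real^'n \<Rightarrow> real \<Rightarrow> 'n lor) \<Rightarrow> bool" where
  "mcf_solution I F Fh \<longleftrightarrow>
     (\<forall>x. Fh x 0 = F x) \<and> (\<forall>t\<in>I. immersion_H (\<lambda>x. Fh x t)) \<and>
     (\<exists>Nh. \<forall>t\<in>I. unit_normal (\<lambda>x. Fh x t) (\<lambda>x. Nh x t) \<and>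
        (\<forall>x. ((\<lambda>s. Fh x s) has_vector_derivative
               (mean_curv (\<lambda>y. Fh y t) (\<lambda>y. Nh y t) x *\<^sub>R Nh x t)) (at t within I)))"

end

theory Submission
  imports Defs
begin

definition Jl :: "'n::finite lor \<Rightarrow> 'n lor" where "Jl q = (fst q, fst (snd q), - snd (snd q))"
definition sp :: "'n::finite lor \<Rightarrow> (real^'n) \<times> real" where "sp q = (fst q, fst (snd q))"
definition tm :: "'n::finite lor \<Rightarrow> real" where "tm q = snd (snd q)"

lemma lorentz_inner: "lorentz p q = inner p (Jl q)"
  by (cases p; cases q) (auto simp: lorentz_def Jl_def)

lemma lorentz_sp: "lorentz p q = inner (sp p) (sp q) - tm p * tm q"
  by (cases p; cases q) (auto simp: lorentz_def sp_def tm_def)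

lemma lorentz_sym: "lorentz p q = lorentz q p"
  by (simp add: lorentz_def inner_commute mult.commute)

lemma lorentz_add_left[simp]: "lorentz (p + q) r = lorentz p r + lorentz q r"
  by (simp add: lorentz_def inner_add_left algebra_simps)
lemma lorentz_add_right[simp]: "lorentz r (p + q) = lorentz r p + lorentz r q"
  by (simp add: lorentz_def inner_add_right algebra_simps)
lemma lorentz_diff_left[simp]: "lorentz (p - q) r = lorentz p r - lorentz q r"
  by (simp add: lorentz_def inner_diff_left algebra_simps)
lemma lorentz_diff_right[simp]: "lorentz r (p - q) = lorentz r p - lorentz r q"
  by (simp add: lorentz_def inner_diff_right algebra_simps)
lemma lorentz_scaleR_left[simp]: "lorentz (c *\<^sub>R p) r = c * lorentz p r"
  by (simp add: lorentz_def algebra_simps)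
lemma lorentz_scaleR_right[simp]: "lorentz r (c *\<^sub>R p) = c * lorentz r p"
  by (simp add: lorentz_def algebra_simps)
lemma lorentz_minus_left[simp]: "lorentz (- p) r = - lorentz p r"
  by (simp add: lorentz_def algebra_simps)
lemma lorentz_minus_right[simp]: "lorentz r (- p) = - lorentz r p"
  by (simp add: lorentz_def algebra_simps)
lemma lorentz_zero[simp]: "lorentz 0 r = 0" "lorentz r 0 = 0"
  by (simp_all add: lorentz_def)

lemma lorentz_bb: "bounded_bilinear (lorentz :: 'n::finite lor \<Rightarrow> _)"
proof -
  have "bilinear (lorentz :: 'n::finite lor \<Rightarrow> _)"
    unfolding bilinear_def linear_iff by simp
  then show ?thesis using bilinear_conv_bounded_bilinear by blast
qed

lemma lorentz_deriv:
  assumes "(f has_derivative f') (at x within S)" "(g has_derivative g') (at x within S)"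
  shows "((\<lambda>y. lorentz (f y) (g y)) has_derivative (\<lambda>h. lorentz (f x) (g' h) + lorentz (f' h) (g x))) (at x within S)"
  using bounded_bilinear.FDERIV[OF lorentz_bb assms] .

lemma deriv_const_zero:
  fixes f :: "'a::real_normed_vector \<Rightarrow> 'b::real_normed_vector"
  assumes "(f has_derivative f') (at x)" "\<forall>y. f y = c"
  shows "f' h = 0"
proof -
  have "f = (\<lambda>y. c)" using assms(2) by auto
  then have "(f has_derivative (\<lambda>h. 0)) (at x)" by simp
  then have "f' = (\<lambda>h. 0)" using has_derivative_unique assms(1) by blast
  then show ?thesis by simp
qed

lemma lorentz_pd:
  assumes "lorentz p p = -1" "lorentz w p = 0"
  shows "lorentz w w \<ge> 0 \<and> (lorentz w w = 0 \<longrightarrow> w = 0)"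
proof -
  define a where "a = sp w"
  define s where "s = sp p"
  define b where "b = tm w"
  define t where "t = tm p"
  have e1: "inner s s - t*t = -1" using assms(1) by (simp add: lorentz_sp s_def t_def)
  have e2: "inner a s = b*t" using assms(2) by (simp add: lorentz_sp a_def s_def b_def t_def)
  have ww: "lorentz w w = inner a a - b*b" by (simp add: lorentz_sp a_def b_def)
  have cs: "(inner a s)^2 \<le> inner a a * inner s s" by (rule Cauchy_Schwarz_ineq)
  have X0: "inner a a \<ge> 0" by simp
  have S0: "inner s s \<ge> 0" by simp
  have key: "(inner a a - b*b) * (inner s s + 1) \<ge> inner a a"
  proof -
    have "t*t = inner s s + 1" using e1 by linarith
    then have "(inner a a - b*b) * (inner s s + 1) = inner a a * inner s s + inner a a - (b*t)^2"
      by (simp add: algebra_simps power2_eq_square)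
    then show ?thesis using cs e2 by simp
  qed
  have pos: "inner s s + 1 > 0" using S0 by linarith
  have g: "inner a a - b*b \<ge> 0"
  proof (rule ccontr)
    assume "\<not> ?thesis"
    then have "(inner a a - b*b) * (inner s s + 1) < 0" using pos by (simp add: mult_neg_pos)
    then show False using key X0 by linarith
  qed
  moreover have "inner a a - b*b = 0 \<longrightarrow> w = 0"
  proof
    assume z: "inner a a - b*b = 0"
    then have "inner a a \<le> 0" using key by simp
    then have a0: "a = 0" by (metis inner_eq_zero_iff order_antisym inner_ge_zero)
    then have "b*t = 0" using e2 by simp
    moreover have "t \<noteq> 0" using e1 S0 by (auto simp del: inner_ge_zero)
    ultimately have "b = 0" by simp
    then show "w = 0" using a0 unfolding a_def b_def sp_def tm_def by (cases w) (auto simp: zero_prod_def)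
  qed
  ultimately show ?thesis using ww by simp
qed

lemma time_pos:
  assumes "lorentz q q = -1" "lorentz v v = 0" "tm v > 0" "lorentz q v < 0"
  shows "tm q > 0"
proof (rule ccontr)
  assume "\<not> ?thesis"
  then have t0: "tm q \<le> 0" by simp
  define a where "a = sp q"
  define s where "s = sp v"
  have e1: "inner a a = tm q * tm q - 1" using assms(1) by (simp add: lorentz_sp a_def)
  have e2: "inner s s = tm v * tm v" using assms(2) by (simp add: lorentz_sp s_def)
  have e3: "inner a s < tm q * tm v" using assms(4) by (simp add: lorentz_sp a_def s_def)
  have cs: "(inner a s)^2 \<le> inner a a * inner s s" by (rule Cauchy_Schwarz_ineq)
  have "tm q * tm v \<le> 0" using t0 assms(3) by (simp add: mult_nonpos_nonneg)
  then have "(- (tm q * tm v)) * (- (tm q * tm v)) < (- inner a s) * (- inner a s)" using e3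
    by (intro mult_strict_mono) auto
  then have "(inner a s)^2 > (tm q * tm v)^2" by (simp add: power2_eq_square)
  moreover have "inner a a * inner s s < (tm q * tm v)^2"
    using e1 e2 assms(3) by (simp add: power2_eq_square algebra_simps)
  ultimately show False using cs by linarith
qed

lemma deriv_lorentz_const:
  assumes "(G has_derivative G') (at x)" "\<forall>y. lorentz (G y) c = k"
  shows "lorentz (G' h) c = 0"
proof -
  have "((\<lambda>y. lorentz (G y) c) has_derivative (\<lambda>h. lorentz (G x) 0 + lorentz (G' h) c)) (at x)"
    by (rule lorentz_deriv[OF assms(1) has_derivative_const])
  from deriv_const_zero[OF this] assms(2) show ?thesis by simp
qed

lemma deriv_lorentz_self:
  assumes "(G has_derivative G') (at x)" "\<forall>y. lorentz (G y) (G y) = k"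
  shows "lorentz (G' h) (G x) = 0"
proof -
  have "((\<lambda>y. lorentz (G y) (G y)) has_derivative (\<lambda>h. lorentz (G x) (G' h) + lorentz (G' h) (G x))) (at x)"
    by (rule lorentz_deriv[OF assms(1) assms(1)])
  from deriv_const_zero[OF this] assms(2) have "lorentz (G x) (G' h) + lorentz (G' h) (G x) = 0" by simp
  then show ?thesis by (simp add: lorentz_sym[of "G x"])
qed

lemma dif_eq: "(G has_derivative G') (at x) \<Longrightarrow> dif G x = G'"
  unfolding dif_def using frechet_derivative_at by metis

lemma dif_works: "G differentiable (at x) \<Longrightarrow> (G has_derivative dif G x) (at x)"
  unfolding dif_def using frechet_derivative_works by blast

lemma dif_linear: "G differentiable (at x) \<Longrightarrow> linear (dif G x)"
  using dif_works has_derivative_linear by blast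

lemma shape_scalar:
  fixes G M :: "real^'n \<Rightarrow> 'n::finite lor"
  assumes lin: "linear (dif G x)" and inj: "inj (dif G x)"
    and tan: "\<forall>h. lorentz (dif G x h) (G x) = 0" and hyp: "lorentz (G x) (G x) = -1"
    and dM: "\<forall>h. dif M x h = - (c *\<^sub>R dif G x h)"
  shows "shape_op G M x = (\<lambda>v. c *\<^sub>R v)"
  unfolding shape_op_def
proof (rule the_equality)
  show "linear (\<lambda>v. c *\<^sub>R v) \<and> (\<forall>v w. ind_metric G x (c *\<^sub>R v) w = sff G M x v w)"
    using lin by (simp add: ind_metric_def sff_def dM linear_scale linear_scaleR)
next
  fix S assume S: "linear S \<and> (\<forall>v w. ind_metric G x (S v) w = sff G M x v w)"
  show "S = (\<lambda>v. c *\<^sub>R v)"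
  proof
    fix v
    define u where "u = S v - c *\<^sub>R v"
    have Du: "dif G x u = dif G x (S v) - c *\<^sub>R dif G x v"
      using lin by (simp add: u_def linear_diff linear_scale)
    have o: "lorentz (dif G x u) (dif G x w) = 0" for w
      using S[THEN conjunct2, rule_format, of v w]
      by (simp add: Du ind_metric_def sff_def dM)
    have "dif G x u = 0" using lorentz_pd[OF hyp tan[rule_format, of u]] o[of u] by simp
    then have "u = 0" using inj lin by (metis linear_0 injD)
    then show "S v = c *\<^sub>R v" by (simp add: u_def)
  qed
qed

lemma trace_scalar: "trace (matrix (\<lambda>v::real^'n::finite. c *\<^sub>R v)) = c * real CARD('n)"
  by (simp add: trace_def matrix_def axis_def)

lemma principal_scalar:
  assumes "shape_op G M x = (\<lambda>v. c *\<^sub>R v)"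
  shows "principal_curvatures G M x = {c}"
proof -
  have "axis undefined (1::real) \<noteq> (0 :: real^'n)" by (simp add: axis_eq_0_iff)
  then show ?thesis
    unfolding principal_curvatures_def assms by auto
qed

lemma image_eq_W:
  fixes F :: "real^'n \<Rightarrow> 'n::finite lor"
  assumes hasF: "(F has_derivative DF) (at x)" and inj: "inj DF"
    and hyp: "\<forall>y. lorentz (F y) (F y) = -1" and hv: "\<forall>y. lorentz (F y) v = -1"
    and vv: "lorentz v v = 0" and tv: "tm v > 0"
  shows "range DF = {w. lorentz w (F x) = 0 \<and> lorentz w v = 0}"
proof -
  define p where "p = F x"
  define W where "W = {w. lorentz w p = 0 \<and> lorentz w v = 0}"
  have lin: "linear DF" using hasF has_derivative_linear by blast
  have t1: "lorentz (DF h) v = 0" for h using deriv_lorentz_const[OF hasF] hv by blast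
  have t2: "lorentz (DF h) p = 0" for h using deriv_lorentz_self[OF hasF] hyp unfolding p_def by blast
  have pp: "lorentz p p = -1" and pv: "lorentz p v = -1" using hyp hv by (auto simp: p_def)
  have vp: "lorentz v p = -1" using pv lorentz_sym by metis
  have subW: "subspace W" unfolding subspace_def W_def by simp
  have subI: "range DF \<subseteq> W" using t1 t2 by (auto simp: W_def)
  have subR: "subspace (range DF)" by (metis lin linear_subspace_image subspace_UNIV)
  have dimR: "dim (range DF) = CARD('n)"
    using dim_image_eq[OF lin, of UNIV] inj by simp
  define T where "T = span {p, v}"
  have subT: "subspace T" unfolding T_def by simp
  have sum: "{a + b |a b. a \<in> W \<and> b \<in> T} = UNIV"
  proof -
    { fix u :: "'n lor"
      define a where "a = - lorentz u v"
      define b where "b = lorentz u v - lorentz u p"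
      define w where "w = u - (a *\<^sub>R p + b *\<^sub>R v)"
      have "w \<in> W" unfolding W_def w_def a_def b_def using pp pv vp vv by (simp add: algebra_simps)
      moreover have "a *\<^sub>R p + b *\<^sub>R v \<in> T" unfolding T_def
        by (intro span_add span_scale span_base) auto
      moreover have "u = w + (a *\<^sub>R p + b *\<^sub>R v)" by (simp add: w_def)
      ultimately have "u \<in> {a + b |a b. a \<in> W \<and> b \<in> T}" by blast }
    then show ?thesis by blast
  qed
  have int: "W \<inter> T = {0}"
  proof -
    { fix y assume y: "y \<in> W" "y \<in> T"
      then obtain k where "y - k *\<^sub>R p \<in> span {v}" unfolding T_def span_insert by auto
      then obtain m where m: "y - k *\<^sub>R p = m *\<^sub>R v" unfolding span_singleton by auto
      then have ye: "y = k *\<^sub>R p + m *\<^sub>R v" by (simp add: algebra_simps)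
      have "lorentz y p = 0" "lorentz y v = 0" using y(1) by (auto simp: W_def)
      then have "-k - m = 0" "-k = 0" using pp pv vp vv by (simp_all add: ye)
      then have "y = 0" using ye by simp }
    moreover have "0 \<in> W" "0 \<in> T" using subW subT by (auto simp: subspace_0)
    ultimately show ?thesis by blast
  qed
  have v0: "v \<noteq> 0" using tv by (auto simp: tm_def)
  have pnot: "p \<notin> span {v}"
  proof
    assume "p \<in> span {v}"
    then obtain k where "p = k *\<^sub>R v" unfolding span_singleton by auto
    then have "lorentz p p = 0" using vv by simp
    then show False using pp by simp
  qed
  have pnv: "p \<noteq> v" using pp vv by auto
  have ind: "independent {p, v}"
    by (rule independent_insertI[OF pnot]) (simp add: v0)
  have dimT: "dim T = 2" unfolding T_def using dim_eq_card_independent[OF ind] pnv by simp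
  have "dim (UNIV :: 'n lor set) + dim (W \<inter> T) = dim W + dim T"
    using dim_sums_Int[OF subW subT] sum by simp
  then have dimW: "dim W = CARD('n)" using int dimT by simp
  have "range DF = W"
    by (rule subspace_dim_equal[OF subR subW subI]) (simp add: dimR dimW)
  then show ?thesis unfolding W_def p_def .
qed



lemma normal_form:
  fixes F N :: "real^'n \<Rightarrow> 'n::finite lor"
  assumes imm: "immersion_H F" and hv: "\<forall>y. lorentz (F y) v = -1"
    and vv: "lorentz v v = 0" and tv: "tm v > 0"
    and un: "unit_normal F N" and pc: "\<forall>x. principal_curvatures F N x = {\<kappa>}"
  shows "N x = \<kappa> *\<^sub>R (v - F x)"
proof -
  have hyp: "\<forall>y. lorentz (F y) (F y) = -1" using imm by (simp add: immersion_H_def hyp_space_def)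
  define b where "b y = lorentz (N y) v" for y
  have vF: "lorentz v (F y) = -1" for y using hv lorentz_sym by metis
  have NF: "N y = b y *\<^sub>R (v - F y)" for y
  proof -
    have hasF: "(F has_derivative dif F y) (at y)" using imm dif_works by (auto simp: immersion_H_def)
    have inj: "inj (dif F y)" using imm by (auto simp: immersion_H_def)
    have R: "range (dif F y) = {w. lorentz w (F y) = 0 \<and> lorentz w v = 0}"
      by (rule image_eq_W[OF hasF inj hyp hv vv tv])
    have t1: "lorentz (dif F y h) v = 0" for h using R by blast
    have t2: "lorentz (dif F y h) (F y) = 0" for h using R by blast
    have nF: "lorentz (N y) (F y) = 0" and nD: "lorentz (N y) (dif F y h) = 0" for h
      using un by (auto simp: unit_normal_def)
    define w where "w = N y - b y *\<^sub>R (v - F y)"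
    have wF: "lorentz w (F y) = 0" using nF vF hyp by (simp add: w_def algebra_simps)
    have "lorentz w v = 0" using vv hv by (simp add: w_def b_def algebra_simps)
    with wF have "w \<in> range (dif F y)" using R by blast
    then obtain h0 where h0: "w = dif F y h0" by blast
    have "lorentz w (dif F y h) = 0" for h
    proof -
      have "lorentz v (dif F y h) = 0" "lorentz (F y) (dif F y h) = 0"
        using t1[of h] t2[of h] lorentz_sym by metis+
      then show ?thesis using nD[of h] by (simp add: w_def)
    qed
    then have "lorentz w w = 0" using h0 by metis
    then have "w = 0" using lorentz_pd[of "F y" w] hyp wF by auto
    then show ?thesis by (simp add: w_def)
  qed
  have bb: "b y * b y = 1" for y
  proof -
    have "lorentz (N y) (N y) = 1" using un by (simp add: unit_normal_def)
    then show ?thesis using NF[of y] vv hv vF hyp by (simp add: algebra_simps)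
  qed
  have hasF: "(F has_derivative dif F x) (at x)" using imm dif_works by (auto simp: immersion_H_def)
  have linF: "linear (dif F x)" using hasF has_derivative_linear by blast
  have injF: "inj (dif F x)" using imm by (auto simp: immersion_H_def)
  have t2: "\<forall>h. lorentz (dif F x h) (F x) = 0" using deriv_lorentz_self[OF hasF] hyp by blast
  have hasN: "(N has_derivative dif N x) (at x)" using un dif_works by (auto simp: unit_normal_def)
  define db where "db h = lorentz (N x) 0 + lorentz (dif N x h) v" for h
  have hb: "(b has_derivative db) (at x)"
    unfolding b_def[abs_def] db_def[abs_def] by (rule lorentz_deriv[OF hasN has_derivative_const])
  have "((\<lambda>y. b y * b y) has_derivative (\<lambda>h. b x * db h + db h * b x)) (at x)"
    by (rule has_derivative_mult[OF hb hb])
  from deriv_const_zero[OF this] bb have "b x * db h + db h * b x = 0" for h by blast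
  moreover have "b x \<noteq> 0" using bb[of x] by auto
  ultimately have db0: "db h = 0" for h by simp
  have "N = (\<lambda>y. b y *\<^sub>R (v - F y))" using NF by auto
  moreover have "((\<lambda>y. b y *\<^sub>R (v - F y)) has_derivative (\<lambda>h. b x *\<^sub>R (0 - dif F x h) + db h *\<^sub>R (v - F x))) (at x)"
    by (intro has_derivative_scaleR hb has_derivative_diff has_derivative_const hasF)
  ultimately have "(N has_derivative (\<lambda>h. b x *\<^sub>R (0 - dif F x h) + db h *\<^sub>R (v - F x))) (at x)"
    by simp
  then have "dif N x = (\<lambda>h. b x *\<^sub>R (0 - dif F x h) + db h *\<^sub>R (v - F x))"
    by (rule dif_eq)
  then have dN: "\<forall>h. dif N x h = - (b x *\<^sub>R dif F x h)" using db0 by simp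
  have "shape_op F N x = (\<lambda>v. b x *\<^sub>R v)"
    by (rule shape_scalar[OF linF injF t2 _ dN]) (use hyp in simp)
  then have "principal_curvatures F N x = {b x}" by (rule principal_scalar)
  then have "b x = \<kappa>" using pc by auto
  then show ?thesis using NF by simp
qed

lemma exp_facts:
  fixes y :: real
  shows "exp y * exp (-y) = 1" "2 * sinh y = exp y - exp (-y)" "2 * cosh y = exp y + exp (-y)"
  by (simp_all add: exp_minus field_simps sinh_field_def cosh_field_def)

lemma flow_fixed_t:
  fixes F :: "real^'n \<Rightarrow> 'n::finite lor"
  assumes imm: "immersion_H F" and hv: "\<forall>y. lorentz (F y) v = -1"
    and vv: "lorentz v v = 0" and tv: "tm v > 0" and kk: "\<kappa> * \<kappa> = 1"
    and Ee: "E * e = 1" and s2: "2 * s = E - e" and epos: "e > 0"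
  defines "G \<equiv> (\<lambda>x. e *\<^sub>R F x + s *\<^sub>R v)"
  defines "M \<equiv> (\<lambda>x. \<kappa> *\<^sub>R (E *\<^sub>R v - G x))"
  shows "immersion_H G" "unit_normal G M" "mean_curv G M x = \<kappa> * real CARD('n)"
    "\<forall>y. lorentz (G y) (E *\<^sub>R v) = -1"
proof -
  have hyp: "\<forall>y. lorentz (F y) (F y) = -1" using imm by (simp add: immersion_H_def hyp_space_def)
  have vF: "lorentz v (F y) = -1" for y using hv lorentz_sym by metis
  have hasF: "(F has_derivative dif F y) (at y)" for y using imm dif_works by (auto simp: immersion_H_def)
  have injF: "inj (dif F y)" for y using imm by (auto simp: immersion_H_def)
  have linF: "linear (dif F y)" for y using hasF has_derivative_linear by blast
  have t1: "lorentz (dif F y h) v = 0" for y h using deriv_lorentz_const[OF hasF] hv by blast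
  have t2: "lorentz (dif F y h) (F y) = 0" for y h using deriv_lorentz_self[OF hasF] hyp by blast
  have t1': "lorentz v (dif F y h) = 0" for y h using t1 lorentz_sym by metis
  have t2': "lorentz (F y) (dif F y h) = 0" for y h using t2 lorentz_sym by metis
  have GG: "lorentz (G y) (G y) = -1" for y
  proof -
    have "lorentz (G y) (G y) = - (e*e) - 2 * (e * s)"
      using hyp hv vF vv by (simp add: G_def algebra_simps)
    also have "\<dots> = -1" using Ee s2 by algebra
    finally show ?thesis .
  qed
  have Gv: "lorentz (G y) v = - e" for y using hv vv by (simp add: G_def)
  have vG: "lorentz v (G y) = - e" for y using Gv lorentz_sym by metis
  show GEv: "\<forall>y. lorentz (G y) (E *\<^sub>R v) = -1" using Gv Ee by (simp add: algebra_simps)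
  have tG: "tm (G y) > 0" for y by (rule time_pos[OF GG vv tv]) (simp add: Gv epos)
  have hasG: "(G has_derivative (\<lambda>h. e *\<^sub>R dif F y h)) (at y)" for y
  proof -
    have "(G has_derivative (\<lambda>h. e *\<^sub>R dif F y h + 0)) (at y)"
      unfolding G_def by (intro has_derivative_add has_derivative_scaleR_right hasF has_derivative_const)
    then show ?thesis by simp
  qed
  have difG: "dif G y = (\<lambda>h. e *\<^sub>R dif F y h)" for y by (rule dif_eq[OF hasG])
  have injG: "inj (dif G y)" for y
    using injF[of y] epos unfolding difG by (auto simp: inj_def)
  have linG: "linear (dif G y)" for y using hasG[of y] difG has_derivative_linear by metis
  show "immersion_H G"
    unfolding immersion_H_def
  proof (intro allI conjI)
    fix y
    show "G y \<in> hyp_space" using GG tG by (simp add: hyp_space_def tm_def)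
    show "G differentiable at y" using hasG by (rule differentiableI)
    show "inj (dif G y)" by (rule injG)
  qed
  have hasM: "(M has_derivative (\<lambda>h. \<kappa> *\<^sub>R (0 - e *\<^sub>R dif F y h))) (at y)" for y
    unfolding M_def by (intro has_derivative_scaleR_right has_derivative_diff has_derivative_const hasG)
  have difM: "\<forall>h. dif M y h = - (\<kappa> *\<^sub>R dif G y h)" for y
    using dif_eq[OF hasM] difG by simp
  have GdG: "lorentz (G y) (dif G y h) = 0" for y h using t1' t2' unfolding difG by (simp add: G_def)
  have dGG: "lorentz (dif G y h) (G y) = 0" for y h using GdG lorentz_sym by metis
  show "unit_normal G M"
    unfolding unit_normal_def
  proof (intro allI conjI)
    fix y h
    show "M differentiable at y" using hasM by (rule differentiableI)
    have "lorentz (M y) (M y) = (\<kappa> * \<kappa>) * (2 * (E * e) - 1)"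
      using GG vG Gv vv by (simp add: M_def algebra_simps)
    then show "lorentz (M y) (M y) = 1" using kk Ee by simp
    have "lorentz (M y) (G y) = \<kappa> * (1 - E * e)"
      using GG vG by (simp add: M_def algebra_simps)
    then show "lorentz (M y) (G y) = 0" using Ee by simp
    show "lorentz (M y) (dif G y h) = 0"
      using GdG[of y h] t1' by (auto simp: M_def difG)
  qed
  have "shape_op G M x = (\<lambda>v. \<kappa> *\<^sub>R v)"
    by (rule shape_scalar[OF linG injG _ GG difM]) (simp add: dGG)
  then show "mean_curv G M x = \<kappa> * real CARD('n)"
    by (simp add: mean_curv_def trace_scalar)
qed

lemma horo_t:
  fixes F :: "real^'n \<Rightarrow> 'n::finite lor"
  assumes rF: "range F = {p \<in> hyp_space. lorentz p v = -1}"
    and vv: "lorentz v v = 0" and tv: "tm v > 0"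
    and Ee: "E * e = 1" and s2: "2 * s = E - e" and epos: "e > 0"
  shows "horosphere (range (\<lambda>x. e *\<^sub>R F x + s *\<^sub>R v))"
proof -
  have Epos: "E > 0" using Ee epos by (metis zero_less_mult_pos2 zero_less_one)
  have hv: "lorentz (F y) v = -1" for y using rF by blast
  have hyp: "lorentz (F y) (F y) = -1" for y using rF by (auto simp: hyp_space_def)
  have vF: "lorentz v (F y) = -1" for y using hv lorentz_sym by metis
  let ?G = "\<lambda>x. e *\<^sub>R F x + s *\<^sub>R v"
  have GG: "lorentz (?G y) (?G y) = -1" for y
  proof -
    have "lorentz (?G y) (?G y) = - (e*e) - 2 * (e * s)"
      using hyp hv vF vv by (simp add: algebra_simps)
    also have "\<dots> = -1" using Ee s2 by algebra
    finally show ?thesis .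
  qed
  have Gv: "lorentz (?G y) v = - e" for y using hv vv by simp
  have tG: "tm (?G y) > 0" for y by (rule time_pos[OF GG vv tv]) (simp add: hv vv epos)
  show ?thesis
    unfolding horosphere_def
  proof (intro exI conjI)
    show "lorentz (E *\<^sub>R v) (E *\<^sub>R v) = 0" using vv by simp
    show "snd (snd (E *\<^sub>R v)) > 0" using tv Epos by (simp add: tm_def)
    show "range ?G = {p \<in> hyp_space. lorentz p (E *\<^sub>R v) = - 1}"
    proof
      show "range ?G \<subseteq> {p \<in> hyp_space. lorentz p (E *\<^sub>R v) = - 1}"
      proof
        fix p assume "p \<in> range ?G"
        then obtain y where p: "p = ?G y" by auto
        have a: "lorentz p p = -1" unfolding p by (rule GG)
        have b: "tm p > 0" unfolding p by (rule tG)
        have c: "lorentz p v = - e" unfolding p by (rule Gv)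
        show "p \<in> {p \<in> hyp_space. lorentz p (E *\<^sub>R v) = - 1}"
          using a b c Ee by (simp add: hyp_space_def tm_def algebra_simps)
      qed
    next
      show "{p \<in> hyp_space. lorentz p (E *\<^sub>R v) = - 1} \<subseteq> range ?G"
      proof
        fix p assume p: "p \<in> {p \<in> hyp_space. lorentz p (E *\<^sub>R v) = - 1}"
        then have pp: "lorentz p p = -1" and pE: "E * lorentz p v = -1" by (auto simp: hyp_space_def)
        have pv: "lorentz p v = - e" using pE Ee
          by (metis mult.commute mult_minus_left mult_cancel_left2 Epos less_irrefl mult_left_cancel)
        have vp: "lorentz v p = - e" using pv lorentz_sym by metis
        define q where "q = E *\<^sub>R (p - s *\<^sub>R v)"
        have qv: "lorentz q v = -1" using pv vv Ee by (simp add: q_def algebra_simps)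
        have "lorentz q q = E * E * (-1 + 2 * s * e)"
          using pp pv vp vv by (simp add: q_def algebra_simps)
        also have "\<dots> = -1" using Ee s2 by algebra
        finally have qq: "lorentz q q = -1" .
        have "tm q > 0" by (rule time_pos[OF qq vv tv]) (simp add: qv)
        then have "q \<in> range F" using rF qq qv by (auto simp: hyp_space_def tm_def)
        then obtain x where x: "q = F x" by auto
        have "?G x = p" using Ee unfolding x[symmetric] q_def
          by (simp add: algebra_simps scaleR_diff_right)
        then show "p \<in> range ?G" by (metis rangeI)
      qed
    qed
  qed
qed

theorem proposition2:
  fixes F N :: "real^'n \<Rightarrow> 'n::finite lor" and \<kappa> :: real
  assumes "immersion_H F"
    and "horosphere (range F)"
    and "unit_normal F N"
    and "\<forall>x. principal_curvatures F N x = {\<kappa>}"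
    and "\<kappa> = 1 \<or> \<kappa> = -1"
  shows "mcf_solution UNIV F
           (\<lambda>x t. cosh (real CARD('n) * t) *\<^sub>R F x + (\<kappa> * sinh (real CARD('n) * t)) *\<^sub>R N x)
       \<and> (\<forall>t. horosphere (range (\<lambda>x. cosh (real CARD('n) * t) *\<^sub>R F x
                                   + (\<kappa> * sinh (real CARD('n) * t)) *\<^sub>R N x)))"
proof -
  obtain v where vv: "lorentz v v = 0" and tv0: "snd (snd v) > 0"
    and rF: "range F = {p \<in> hyp_space. lorentz p v = -1}"
    using assms(2) unfolding horosphere_def by blast
  have tv: "tm v > 0" using tv0 by (simp add: tm_def)
  have hv: "\<forall>y. lorentz (F y) v = -1" using rF by blast
  have kk: "\<kappa> * \<kappa> = 1" using assms(5) by auto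
  have NF: "N x = \<kappa> *\<^sub>R (v - F x)" for x
    by (rule normal_form[OF assms(1) hv vv tv assms(3) assms(4)])
  define G where "G t x = exp (-(real CARD('n) * t)) *\<^sub>R F x + sinh (real CARD('n) * t) *\<^sub>R v" for t x
  define M where "M t x = \<kappa> *\<^sub>R (exp (real CARD('n) * t) *\<^sub>R v - G t x)" for t x
  have eq: "cosh (real CARD('n) * t) *\<^sub>R F x + (\<kappa> * sinh (real CARD('n) * t)) *\<^sub>R N x = G t x" for x t
  proof -
    have "(\<kappa> * sinh (real CARD('n) * t)) *\<^sub>R N x = ((\<kappa> * \<kappa>) * sinh (real CARD('n) * t)) *\<^sub>R (v - F x)"
      by (simp add: NF mult.commute mult.left_commute)
    also have "\<dots> = sinh (real CARD('n) * t) *\<^sub>R v - sinh (real CARD('n) * t) *\<^sub>R F x"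
      using kk by (simp add: scaleR_diff_right)
    finally have "cosh (real CARD('n) * t) *\<^sub>R F x + (\<kappa> * sinh (real CARD('n) * t)) *\<^sub>R N x
        = (cosh (real CARD('n) * t) - sinh (real CARD('n) * t)) *\<^sub>R F x + sinh (real CARD('n) * t) *\<^sub>R v"
      by (simp add: algebra_simps)
    then show ?thesis by (simp add: G_def cosh_minus_sinh)
  qed
  have fl: "immersion_H (G t)" "unit_normal (G t) (M t)" "mean_curv (G t) (M t) x = \<kappa> * real CARD('n)" for t x
    using flow_fixed_t[OF assms(1) hv vv tv kk exp_facts(1) exp_facts(2) exp_gt_zero, of "real CARD('n) * t"]
    unfolding G_def[abs_def] M_def[abs_def] by auto
  have hor: "horosphere (range (G t))" for t
    using horo_t[OF rF vv tv exp_facts(1) exp_facts(2) exp_gt_zero, of "real CARD('n) * t"]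
    unfolding G_def[abs_def] by simp
  have vd: "((\<lambda>s. G s x) has_vector_derivative ((\<kappa> * real CARD('n)) *\<^sub>R M t x)) (at t within UNIV)" for x t
  proof -
    let ?n = "real CARD('n)"
    have d1: "((\<lambda>s. exp (-(?n * s))) has_real_derivative (- ?n * exp (-(?n * t)))) (at t)"
      by (auto intro!: derivative_eq_intros)
    have d2: "((\<lambda>s. sinh (?n * s)) has_real_derivative (?n * cosh (?n * t))) (at t)"
      by (auto intro!: derivative_eq_intros)
    have "((\<lambda>s. G s x) has_vector_derivative
        ((exp (-(?n * t)) *\<^sub>R 0 + (- ?n * exp (-(?n * t))) *\<^sub>R F x) + (sinh (?n * t) *\<^sub>R 0 + (?n * cosh (?n * t)) *\<^sub>R v))) (at t)"
      unfolding G_def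
      by (intro has_vector_derivative_add has_vector_derivative_scaleR d1 d2 has_vector_derivative_const)
    moreover have "(\<kappa> * ?n) *\<^sub>R M t x = (- ?n * exp (-(?n * t))) *\<^sub>R F x + (?n * cosh (?n * t)) *\<^sub>R v"
    proof -
      have "M t x = \<kappa> *\<^sub>R ((exp (?n * t) - sinh (?n * t)) *\<^sub>R v - exp (-(?n * t)) *\<^sub>R F x)"
        by (simp add: M_def G_def algebra_simps)
      also have "exp (?n * t) - sinh (?n * t) = cosh (?n * t)"
        using cosh_plus_sinh[of "?n * t"] by linarith
      finally have "(\<kappa> * ?n) *\<^sub>R M t x = ((\<kappa> * \<kappa>) * ?n) *\<^sub>R (cosh (?n * t) *\<^sub>R v - exp (-(?n * t)) *\<^sub>R F x)"
        by (simp add: mult.commute mult.left_commute)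
      then show ?thesis using kk by (simp add: algebra_simps)
    qed
    ultimately show ?thesis by simp
  qed
  have "(\<lambda>x t. cosh (real CARD('n) * t) *\<^sub>R F x + (\<kappa> * sinh (real CARD('n) * t)) *\<^sub>R N x) = (\<lambda>x t. G t x)"
    using eq by auto
  moreover have "mcf_solution UNIV F (\<lambda>x t. G t x)"
    unfolding mcf_solution_def
  proof (intro conjI allI ballI exI[where x="\<lambda>x t. M t x"])
    show "G 0 x = F x" for x by (simp add: G_def)
    show "immersion_H (\<lambda>x. G t x)" for t using fl(1)[of t] by (simp add: eta_contract_eq)
    fix t :: real
    show "unit_normal (\<lambda>x. G t x) (\<lambda>x. M t x)" using fl(2)[of t] by (simp add: eta_contract_eq)
    fix x
    show "((\<lambda>s. G s x) has_vector_derivative mean_curv (\<lambda>y. G t y) (\<lambda>y. M t y) x *\<^sub>R M t x) (at t within UNIV)"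
      using vd[of x t] fl(3)[of t x] by (simp add: eta_contract_eq)
  qed
  moreover have "\<forall>t. horosphere (range (\<lambda>x. G t x))" using hor by (simp add: eta_contract_eq)
  ultimately show ?thesis using eq by simp
qed

end
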